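(* For every $n\geq0$, $$\sum_{\sigma\in\mathfrak S_n}(xy)^{{\rm L}(\sigma)}\Bigl(\frac{x+y}{2}\Bigr)^{n-2{\rm L}(\sigma)}\beta^{{\rm RLmin}(\sigma)}=\sum_{\sigma\in\mathfrak S_{n+1}}x^{{\rm des}(\sigma)}y^{n-{\rm des}(\sigma)}\Bigl(\frac{\beta}{2}\Bigr)^{{\rm LRmin}(\sigma)+{\rm RLmin}(\sigma)-2}.$$
   Context: For $\sigma=\sigma_1\cdots\sigma_m\in\mathfrak S_m$: ${\rm des}(\sigma)$ is the number of $i\in[m-1]$ with $\sigma_i>\sigma_{i+1}$; ${\rm L}(\sigma)$ (left peaks) is the number of $i$ with $1\le i<m$ and $\sigma_{i-1}<\sigma_i>\sigma_{i+1}$, with the convention $\sigma_0=0$; ${\rm LRmin}(\sigma)$ is the number of $i$ with $\sigma_j>\sigma_i$ for all $j<i$; ${\rm RLmin}(\sigma)$ is the number of $i$ with $\sigma_j>\sigma_i$ for all $j>i$. $\mathfrak S_0$ consists of the empty permutation (contributing $1$). *)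

theory Defs
  imports "HOL-Combinatorics.Multiset_Permutations"
begin

text \<open>Permutations of [m] = {1..m} are represented as lists (one-line notation);
  list index k (0-based) corresponds to position k+1.\<close>

definition des :: "nat list \<Rightarrow> nat" where
  "des s = card {i. Suc i < length s \<and> s ! i > s ! Suc i}"

definition lpk :: "nat list \<Rightarrow> nat" where
  "lpk s = card {i. Suc i < length s \<and>
      (if i = 0 then 0 else s ! (i - 1)) < s ! i \<and> s ! i > s ! Suc i}"

definition lrmin :: "nat list \<Rightarrow> nat" where
  "lrmin s = card {i. i < length s \<and> (\<forall>j<i. s ! j > s ! i)}"

definition rlmin :: "nat list \<Rightarrow> nat" where
  "rlmin s = card {i. i < length s \<and> (\<forall>j. i < j \<and> j < length s \<longrightarrow> s ! j > s ! i)}"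

end

theory Submission
  imports Defs "HOL-Computational_Algebra.Polynomial"
begin

lemma card_less_Suc:
  "card {i. i < Suc m \<and> P i} = (if P 0 then 1 else 0) + card {i. i < m \<and> P (Suc i)}"
proof -
  have "{i. i < Suc m \<and> P i} = (if P 0 then {0} else {}) \<union> Suc ` {i. i < m \<and> P (Suc i)}"
    by (auto simp: less_Suc_eq_0_disj)
  moreover have "card (Suc ` {i. i < m \<and> P (Suc i)}) = card {i. i < m \<and> P (Suc i)}"
    by (rule card_image) simp
  ultimately show ?thesis by (auto simp: card_insert_if)
qed

lemma des_Nil [simp]: "des [] = 0" by (simp add: des_def)
lemma des_single [simp]: "des [a] = 0" by (simp add: des_def)
lemma des_Cons2 [simp]: "des (a # b # xs) = (if b < a then 1 else 0) + des (b # xs)"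
proof -
  have "des (a # b # xs) = card {i. i < Suc (Suc (length xs)) - 1 \<and> (a#b#xs) ! Suc i < (a#b#xs) ! i}"
    unfolding des_def by (rule arg_cong[where f=card]) auto
  also have "\<dots> = (if b < a then 1 else 0) + card {i. i < length xs \<and> (b#xs) ! Suc i < (b#xs) ! i}"
    by (simp add: card_less_Suc)
  also have "card {i. i < length xs \<and> (b#xs) ! Suc i < (b#xs) ! i} = des (b # xs)"
    unfolding des_def by (rule arg_cong[where f=card]) auto
  finally show ?thesis .
qed

definition lpkI :: "nat \<Rightarrow> nat list \<Rightarrow> nat" where
  "lpkI p s = card {i. Suc i < length s \<and>
      (if i = 0 then p else s ! (i - 1)) < s ! i \<and> s ! i > s ! Suc i}"

lemma lpk_lpkI: "lpk s = lpkI 0 s" by (simp add: lpk_def lpkI_def)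

lemma lpkI_Nil [simp]: "lpkI p [] = 0" by (simp add: lpkI_def)
lemma lpkI_single [simp]: "lpkI p [a] = 0" by (simp add: lpkI_def)
lemma lpkI_Cons2 [simp]: "lpkI p (a # b # xs) = (if p < a \<and> b < a then 1 else 0) + lpkI a (b # xs)"
proof -
  have "lpkI p (a # b # xs) = card {i. i < Suc (length xs) \<and>
      (if i = 0 then p else (a#b#xs) ! (i - 1)) < (a#b#xs) ! i \<and> (a#b#xs) ! i > (a#b#xs) ! Suc i}"
    unfolding lpkI_def by (rule arg_cong[where f=card]) auto
  also have "\<dots> = (if p < a \<and> b < a then 1 else 0) + card {i. i < length xs \<and>
      (a#b#xs) ! i < (b#xs) ! i \<and> xs ! i < (b#xs) ! i}"
    by (subst card_less_Suc) simp
  also have "card {i. i < length xs \<and>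
      (a#b#xs) ! i < (b#xs) ! i \<and> xs ! i < (b#xs) ! i} = lpkI a (b # xs)"
    unfolding lpkI_def by (rule arg_cong[where f=card], rule Collect_cong) (auto split: nat.splits)
  finally show ?thesis .
qed

lemma rlmin_Nil [simp]: "rlmin [] = 0" by (simp add: rlmin_def)
lemma rlmin_Cons [simp]: "rlmin (a # xs) = (if \<forall>z\<in>set xs. a < z then 1 else 0) + rlmin xs"
proof -
  have "rlmin (a # xs) = card {i. i < Suc (length xs) \<and> (\<forall>j. i < j \<and> j < Suc (length xs) \<longrightarrow> (a#xs) ! j > (a#xs) ! i)}"
    unfolding rlmin_def by simp
  also have "\<dots> = (if (\<forall>j. 0 < j \<and> j < Suc (length xs) \<longrightarrow> (a#xs) ! j > a) then 1 else 0)
     + card {i. i < length xs \<and> (\<forall>j. Suc i < j \<and> j < Suc (length xs) \<longrightarrow> (a#xs) ! j > xs ! i)}"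
    by (simp add: card_less_Suc)
  also have "(\<forall>j. 0 < j \<and> j < Suc (length xs) \<longrightarrow> (a#xs) ! j > a) \<longleftrightarrow> (\<forall>z\<in>set xs. a < z)"
  proof safe
    fix z assume h: "\<forall>j. 0 < j \<and> j < Suc (length xs) \<longrightarrow> (a#xs) ! j > a" and z: "z \<in> set xs"
    then obtain i where "i < length xs" "z = xs ! i" by (auto simp: in_set_conv_nth)
    thus "a < z" using h[rule_format, of "Suc i"] by simp
  next
    fix j assume "\<forall>z\<in>set xs. a < z" "0 < j" "j < Suc (length xs)"
    thus "(a#xs) ! j > a" by (cases j) auto
  qed
  also have "{i. i < length xs \<and> (\<forall>j. Suc i < j \<and> j < Suc (length xs) \<longrightarrow> (a#xs) ! j > xs ! i)}
     = {i. i < length xs \<and> (\<forall>j. i < j \<and> j < length xs \<longrightarrow> xs ! j > xs ! i)}"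
    apply (rule Collect_cong)
    apply safe
     apply (metis Suc_less_eq nth_Cons_Suc)
    by (metis Suc_lessE Suc_less_eq nth_Cons_Suc)
  finally show ?thesis by (simp add: rlmin_def)
qed

lemma lrmin_rev: "lrmin s = rlmin (rev s)"
proof -
  let ?n = "length s"
  let ?A = "{i. i < ?n \<and> (\<forall>j<i. s ! j > s ! i)}"
  let ?B = "{i. i < ?n \<and> (\<forall>j. i < j \<and> j < ?n \<longrightarrow> rev s ! j > rev s ! i)}"
  have "?B = (\<lambda>i. ?n - Suc i) ` ?A"
  proof safe
    fix i assume i: "i < ?n" and h: "\<forall>j. i < j \<and> j < ?n \<longrightarrow> rev s ! j > rev s ! i"
    show "i \<in> (\<lambda>i. ?n - Suc i) ` ?A"
    proof (rule image_eqI[where x="?n - Suc i"])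
      show "i = ?n - Suc (?n - Suc i)" using i by simp
      show "?n - Suc i \<in> ?A"
      proof safe
        show "?n - Suc i < ?n" using i by simp
        fix j assume j: "j < ?n - Suc i"
        have "i < ?n - Suc j" "?n - Suc j < ?n" using i j by auto
        hence "rev s ! (?n - Suc j) > rev s ! i" using h by blast
        thus "s ! j > s ! (?n - Suc i)" using i j by (simp add: rev_nth)
      qed
    qed
  next
    fix i assume "i < ?n" "\<forall>j<i. s ! j > s ! i"
    thus "?n - Suc i < ?n" by simp
  next
    fix i j assume i: "i < ?n" and h: "\<forall>j<i. s ! j > s ! i" and j: "?n - Suc i < j" "j < ?n"
    have "?n - Suc j < i" using i j by auto
    hence "s ! (?n - Suc j) > s ! i" using h by blast
    thus "rev s ! j > rev s ! (?n - Suc i)" using i j by (simp add: rev_nth)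
  qed
  moreover have "inj_on (\<lambda>i. ?n - Suc i) ?A" by (auto simp: inj_on_def)
  ultimately show ?thesis unfolding lrmin_def rlmin_def by (simp add: card_image)
qed

definition ins :: "nat \<Rightarrow> nat \<Rightarrow> nat list \<Rightarrow> nat list" where
  "ins j M xs = take j xs @ M # drop j xs"

lemma ins_0 [simp]: "ins 0 M xs = M # xs" by (simp add: ins_def)
lemma ins_Suc_Cons [simp]: "ins (Suc j) M (a # xs) = a # ins j M xs" by (simp add: ins_def)
lemma ins_len: "length xs \<le> j \<Longrightarrow> ins j M xs = xs @ [M]" by (simp add: ins_def)
lemma set_ins [simp]: "set (ins j M xs) = insert M (set xs)"
  unfolding ins_def by (metis append_take_drop_id set_append set_simps(2) Un_insert_right Un_insert_left
      insert_commute sup_commute)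
lemma rev_ins: "j \<le> length xs \<Longrightarrow> rev (ins j M xs) = ins (length xs - j) M (rev xs)"
  by (simp add: ins_def rev_take rev_drop)

lemma rlmin_ins:
  "\<forall>z\<in>set xs. z < M \<Longrightarrow> rlmin (ins j M xs) = rlmin xs + (if length xs \<le> j then 1 else 0)"
proof (induction xs arbitrary: j)
  case Nil then show ?case by (simp add: ins_len)
next
  case (Cons a xs)
  show ?case
  proof (cases j)
    case 0 then show ?thesis using Cons.prems by auto
  next
    case (Suc j')
    have "(\<forall>z\<in>insert M (set xs). a < z) = (\<forall>z\<in>set xs. a < z)" using Cons.prems by auto
    then show ?thesis using Cons Suc by simp
  qed
qed

lemma lrmin_ins:
  assumes "\<forall>z\<in>set xs. z < M" "j \<le> length xs"
  shows "lrmin (ins j M xs) = lrmin xs + (if j = 0 then 1 else 0)"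
  using assms by (simp add: lrmin_rev rev_ins rlmin_ins; arith)

lemma des_M_Cons: "xs \<noteq> [] \<Longrightarrow> \<forall>z\<in>set xs. z < M \<Longrightarrow> des (M # xs) = des xs + 1"
  by (cases xs) auto

lemma des_snoc: "\<forall>z\<in>set xs. z < M \<Longrightarrow> des (xs @ [M]) = des xs"
proof (induction xs)
  case Nil then show ?case by simp
next
  case (Cons a xs) then show ?case by (cases xs) auto
qed

lemma lpkI_snoc: "\<forall>z\<in>set xs. z < M \<Longrightarrow> lpkI p (xs @ [M]) = lpkI p xs"
proof (induction xs arbitrary: p)
  case Nil then show ?case by simp
next
  case (Cons a xs) then show ?case by (cases xs) auto
qed

lemma des_mid:
  fixes g :: "nat \<Rightarrow> 'b::comm_ring_1"
  assumes "\<forall>z\<in>set xs. z < M"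
  shows "(\<Sum>j<length xs - 1. g (des (ins (Suc j) M xs))) + of_nat (des xs) * g (des xs + 1)
       = of_nat (des xs) * g (des xs) + of_nat (length xs - 1) * g (des xs + 1)"
  using assms
proof (induction xs arbitrary: g)
  case Nil then show ?case by simp
next
  case (Cons a xs)
  show ?case
  proof (cases xs)
    case Nil then show ?thesis by simp
  next
    case (Cons b r)
    have aM: "a < M" and bM: "b < M" and rM: "\<forall>z\<in>set r. z < M" using Cons.prems Cons by auto
    define e :: nat where "e = (if b < a then 1 else 0)"
    define d' where "d' = des (b # r)"
    have d: "des (a # b # r) = e + d'" by (simp add: e_def d'_def)
    have IH: "(\<Sum>j<length r. g (e + des (ins (Suc j) M (b#r)))) + of_nat d' * g (e + (d' + 1))
       = of_nat d' * g (e + d') + of_nat (length r) * g (e + (d' + 1))"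
      using Cons.IH[of "\<lambda>k. g (e + k)"] Cons.prems Cons by (simp add: d'_def)
    have "(\<Sum>j<length (a#xs) - 1. g (des (ins (Suc j) M (a#xs))))
        = (\<Sum>j<Suc (length r). g (des (a # ins j M (b#r))))" using Cons by simp
    also have "\<dots> = g (des (a # M # b # r)) + (\<Sum>j<length r. g (des (a # b # ins j M r)))"
      by (subst sum.lessThan_Suc_shift) simp
    also have "des (a # M # b # r) = 1 + d'" using aM bM rM by (simp add: d'_def)
    also have "(\<Sum>j<length r. g (des (a # b # ins j M r))) = (\<Sum>j<length r. g (e + des (ins (Suc j) M (b#r))))"
      by (simp add: e_def)
    finally have S: "(\<Sum>j<length (a#xs) - 1. g (des (ins (Suc j) M (a#xs))))
        = g (1 + d') + (\<Sum>j<length r. g (e + des (ins (Suc j) M (b#r))))" .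
    show ?thesis
    proof (cases "b < a")
      case True
      then have "e = 1" by (simp add: e_def)
      then show ?thesis using S IH Cons d by (simp add: algebra_simps)
    next
      case False
      then have "e = 0" by (simp add: e_def)
      then show ?thesis using S IH Cons d by (simp add: algebra_simps)
    qed
  qed
qed

lemma lpkI_Cons_ins:
  assumes "a < M"
  shows "lpkI p (a # ins j M (b # r)) = (if j = 0 then 0 else (if p < a \<and> b < a then 1 else 0)) + lpkI a (ins j M (b # r))"
  using assms by (cases j) auto

lemma lpk_slots:
  fixes g :: "nat \<Rightarrow> 'b::comm_ring_1"
  assumes "\<forall>z\<in>set xs. z < M" "p < M"
  shows "(\<Sum>j<length xs. g (lpkI p (ins j M xs))) + of_nat (2 * lpkI p xs) * g (lpkI p xs + 1)
       = of_nat (2 * lpkI p xs) * g (lpkI p xs) + of_nat (length xs) * g (lpkI p xs + 1)"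
  using assms
proof (induction xs arbitrary: g p)
  case Nil then show ?case by simp
next
  case (Cons a xs)
  show ?case
  proof (cases xs)
    case Nil then show ?thesis using Cons.prems by simp
  next
    case (Cons b r)
    have aM: "a < M" and bM: "b < M" and rM: "\<forall>z\<in>set r. z < M" using Cons.prems Cons by auto
    define e :: nat where "e = (if p < a \<and> b < a then 1 else 0)"
    define k1 where "k1 = lpkI a (b # r)"
    have k: "lpkI p (a # b # r) = e + k1" by (simp add: e_def k1_def)
    define X where "X = (\<lambda>j. lpkI a (ins j M (b # r)))"
    have IH: "(\<Sum>j<Suc (length r). g (e + X j)) + of_nat (2 * k1) * g (e + (k1 + 1))
       = of_nat (2 * k1) * g (e + k1) + of_nat (Suc (length r)) * g (e + (k1 + 1))"
      using Cons.IH[of a "\<lambda>k. g (e + k)"] Cons.prems Cons aM by (simp add: k1_def X_def)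
    have L: "length (a#xs) = Suc (Suc (length r))" using Cons by simp
    have "(\<Sum>j<length (a#xs). g (lpkI p (ins j M (a#xs))))
        = g (lpkI p (ins 0 M (a#xs))) + (\<Sum>j<Suc (length r). g (lpkI p (ins (Suc j) M (a#xs))))"
      unfolding L by (rule sum.lessThan_Suc_shift)
    also have "\<dots> = g (lpkI p (M # a # b # r)) + (\<Sum>j<Suc (length r). g (lpkI p (a # ins j M (b#r))))"
      using Cons by simp
    also have "lpkI p (M # a # b # r) = 1 + k1" using aM Cons.prems by (simp add: k1_def)
    also have "(\<Sum>j<Suc (length r). g (lpkI p (a # ins j M (b#r))))
       = (\<Sum>j<Suc (length r). g ((if j = 0 then 0 else e) + X j))"
      by (rule sum.cong[OF refl]) (simp only: lpkI_Cons_ins[OF aM] e_def X_def)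
    finally have S: "(\<Sum>j<length (a#xs). g (lpkI p (ins j M (a#xs))))
        = g (1 + k1) + (\<Sum>j<Suc (length r). g ((if j = 0 then 0 else e) + X j))" .
    have L2: "length (a#xs) = Suc (Suc (length r))" using Cons by simp
    show ?thesis
    proof (cases "e = 0")
      case True
      have A: "(\<Sum>j<Suc (length r). g ((if j = 0 then 0 else e) + X j)) = (\<Sum>j<Suc (length r). g (X j))"
        by (rule sum.cong) (auto simp: True)
      have IH0: "(\<Sum>j<Suc (length r). g (X j)) + of_nat (2 * k1) * g (Suc k1)
           = of_nat (2 * k1) * g k1 + of_nat (Suc (length r)) * g (Suc k1)"
        using IH unfolding True by simp_all
      have kk: "lpkI p (a # xs) = k1" using k True Cons by simp
      show ?thesis apply (subst S) unfolding kk L2 A using IH0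
        by (simp del: sum.lessThan_Suc add: algebra_simps)
    next
      case False
      then have e1: "e = 1" by (simp add: e_def split: if_splits)
      then have ba: "b < a" by (simp add: e_def split: if_splits)
      have X0: "X 0 = 1 + k1"
      proof (cases r)
        case Nil then show ?thesis using ba aM bM by (simp add: X_def k1_def)
      next
        case (Cons c r') then show ?thesis using ba aM bM by (simp add: X_def k1_def)
      qed
      define C where "C = (\<Sum>j<length r. g (Suc (X (Suc j))))"
      have B: "(\<Sum>j<Suc (length r). g ((if j = 0 then 0 else e) + X j)) = g (Suc k1) + C"
        unfolding C_def by (subst sum.lessThan_Suc_shift) (simp add: X0 e1)
      have IH1: "g (Suc (Suc k1)) + C + of_nat (2 * k1) * g (Suc (Suc k1))
           = of_nat (2 * k1) * g (Suc k1) + of_nat (Suc (length r)) * g (Suc (Suc k1))"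
      proof -
        have "(\<Sum>j<Suc (length r). g (e + X j)) = g (Suc (Suc k1)) + C"
          unfolding C_def by (subst sum.lessThan_Suc_shift) (simp add: X0 e1)
        then show ?thesis using IH unfolding e1 by simp
      qed
      have kk: "lpkI p (a # xs) = Suc k1" using k e1 Cons by simp
      show ?thesis apply (subst S) unfolding kk L2 B using IH1
        by (simp del: sum.lessThan_Suc add: algebra_simps)
    qed
  qed
qed

lemma distinct_ins: "distinct xs \<Longrightarrow> M \<notin> set xs \<Longrightarrow> distinct (ins j M xs)"
  unfolding ins_def
  by (auto simp: set_take_disj_set_drop_if_distinct dest: in_set_takeD in_set_dropD)

lemma sum_perms_insert:
  assumes A: "finite A" and M: "M \<notin> A"
  shows "(\<Sum>s\<in>permutations_of_set (insert M A). f s)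
       = (\<Sum>\<sigma>\<in>permutations_of_set A. \<Sum>j\<le>card A. f (ins j M \<sigma>))"
proof -
  let ?h = "\<lambda>(\<sigma>, j). ins j M \<sigma>"
  let ?D = "permutations_of_set A \<times> {..card A}"
  have bij: "bij_betw ?h ?D (permutations_of_set (insert M A))"
  proof (rule bij_betwI')
    fix p q assume p: "p \<in> ?D" and q: "q \<in> ?D"
    obtain \<sigma> j where pe: "p = (\<sigma>, j)" by (cases p)
    obtain \<sigma>' j' where qe: "q = (\<sigma>', j')" by (cases q)
    have s1: "set \<sigma> = A" "distinct \<sigma>" "j \<le> length \<sigma>"
      using p pe A by (auto dest: permutations_of_setD simp: length_finite_permutations_of_set)
    have s2: "set \<sigma>' = A" "distinct \<sigma>'" "j' \<le> length \<sigma>'"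
      using q qe A by (auto dest: permutations_of_setD simp: length_finite_permutations_of_set)
    show "(?h p = ?h q) = (p = q)"
    proof
      assume "?h p = ?h q"
      then have e: "take j \<sigma> @ M # drop j \<sigma> = take j' \<sigma>' @ M # drop j' \<sigma>'"
        by (simp add: pe qe ins_def)
      have nt: "M \<notin> set (take j \<sigma>)" and nd: "M \<notin> set (drop j \<sigma>)"
        using s1 M by (auto dest: in_set_takeD in_set_dropD)
      have td: "take j \<sigma> = take j' \<sigma>' \<and> drop j \<sigma> = drop j' \<sigma>'"
        using iffD1[OF append_Cons_eq_iff[OF nt nd] e] by simp
      then have "\<sigma> = \<sigma>'" by (metis append_take_drop_id)
      moreover have "length (take j \<sigma>) = length (take j' \<sigma>')" using td by simp
      then have "j = j'" using s1 s2 by simp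
      ultimately have "\<sigma> = \<sigma>'" "j = j'" by auto
      then show "p = q" by (simp add: pe qe)
    qed simp
  next
    fix p assume p: "p \<in> ?D"
    obtain \<sigma> j where pe: "p = (\<sigma>, j)" by (cases p)
    have s1: "set \<sigma> = A" "distinct \<sigma>" "j \<le> length \<sigma>"
      using p pe A by (auto dest: permutations_of_setD simp: length_finite_permutations_of_set)
    show "?h p \<in> permutations_of_set (insert M A)"
      using s1 M by (auto simp: pe permutations_of_set_def distinct_ins)
  next
    fix s assume s: "s \<in> permutations_of_set (insert M A)"
    then have ss: "set s = insert M A" "distinct s" by (auto dest: permutations_of_setD)
    obtain ys zs where s_eq: "s = ys @ M # zs" using split_list[of M s] ss(1) by auto
    have "set (ys @ zs) = A" "distinct (ys @ zs)" using ss M s_eq by auto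
    then have "ys @ zs \<in> permutations_of_set A" by auto
    moreover have "length ys \<le> card A"
    proof -
      have "card A = length (ys @ zs)" using \<open>set (ys @ zs) = A\<close> \<open>distinct (ys @ zs)\<close>
        by (metis distinct_card)
      then show ?thesis by simp
    qed
    moreover have "s = ins (length ys) M (ys @ zs)" by (simp add: s_eq ins_def)
    ultimately show "\<exists>p\<in>?D. s = ?h p" by (intro bexI[of _ "(ys @ zs, length ys)"]) auto
  qed
  have "(\<Sum>s\<in>permutations_of_set (insert M A). f s) = (\<Sum>p\<in>?D. f (?h p))"
    by (rule sum.reindex_bij_betw[OF bij, symmetric])
  also have "\<dots> = (\<Sum>\<sigma>\<in>permutations_of_set A. \<Sum>j\<le>card A. f (ins j M \<sigma>))"
    by (subst sum.cartesian_product) (simp add: case_prod_unfold)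
  finally show ?thesis .
qed

lemma lpkI_bound: "2 * lpkI p xs \<le> length xs"
proof (induction "length xs" arbitrary: xs p rule: less_induct)
  case less
  show ?case
  proof (cases xs)
    case Nil then show ?thesis by simp
  next
    case (Cons a xs')
    show ?thesis
    proof (cases xs')
      case Nil then show ?thesis using Cons by simp
    next
      case (Cons b r)
      show ?thesis
      proof (cases "p < a \<and> b < a")
        case True
        have "lpkI a (b # r) = lpkI b r"
          using True by (cases r) auto
        moreover have "2 * lpkI b r \<le> length r" using less(1)[of r b] Cons \<open>xs = a # xs'\<close> by simp
        ultimately show ?thesis using True Cons \<open>xs = a # xs'\<close> by simp
      next
        case False
        have "2 * lpkI a (b # r) \<le> length (b # r)" using less(1)[of "b # r" a] Cons \<open>xs = a # xs'\<close> by simp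
        then show ?thesis using False Cons \<open>xs = a # xs'\<close> by auto
      qed
    qed
  qed
qed

lemma pderiv_sum: "pderiv (sum f A) = (\<Sum>x\<in>A. pderiv (f x))"
  by (induction A rule: infinite_finite_induct) (auto simp: pderiv_add)

lemma Xpd_S: "[:0,1:] * pderiv ([:0,y:]^k) = smult (of_nat k) ([:0,y:]^k :: 'a::field_char_0 poly)"
proof (cases k)
  case 0 then show ?thesis by simp
next
  case (Suc k')
  have "[:0,1:] * pderiv ([:0,y:]^k) = smult (of_nat k) ([:0,y:]^k' * ([:0,1:] * [:y:]))"
    by (simp add: Suc pderiv_power_Suc pderiv_pCons mult_ac del: power_Suc)
  also have "[:0,1:] * [:y:] = [:0,y:]" by simp
  finally show ?thesis by (simp add: Suc mult_ac)
qed

definition WL :: "'a::field_char_0 \<Rightarrow> 'a \<Rightarrow> nat \<Rightarrow> nat list \<Rightarrow> 'a poly" where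
  "WL y \<beta> n s = [:0,y:]^lpk s * [:y/2, 1/2:]^(n - 2*lpk s) * [:\<beta>^rlmin s:]"

definition WR :: "'a::field_char_0 \<Rightarrow> 'a \<Rightarrow> nat \<Rightarrow> nat list \<Rightarrow> 'a poly" where
  "WR y \<beta> n s = smult (y^(n - des s) * (\<beta>/2)^(lrmin s + rlmin s - 2)) ([:0,1:]^des s)"

definition Top :: "'a::field_char_0 \<Rightarrow> 'a \<Rightarrow> nat \<Rightarrow> 'a poly \<Rightarrow> 'a poly" where
  "Top y \<beta> n p = [:\<beta>*y/2, \<beta>/2 + of_nat n:] * p + [:y,-1:] * ([:0,1:] * pderiv p)"

lemma Top_sum: "Top y \<beta> n (sum f A) = (\<Sum>x\<in>A. Top y \<beta> n (f x))"
  by (simp add: Top_def pderiv_sum sum_distrib_left sum.distrib)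

lemma WL_step:
  fixes y \<beta> :: "'a::field_char_0"
  assumes M: "\<forall>z\<in>set \<sigma>. z < M" and len: "length \<sigma> = n" and M0: "0 < M"
  shows "(\<Sum>j\<le>n. WL y \<beta> (Suc n) (ins j M \<sigma>)) = Top y \<beta> n (WL y \<beta> n \<sigma>)"
proof -
  define k where "k = lpk \<sigma>"
  define r where "r = rlmin \<sigma>"
  define S where "S = [:0,y:]"
  define U where "U = [:y/2, 1/2:]"
  define C where "C = [:\<beta>^r:]"
  define G where "G = (\<lambda>k'. S^k' * U^(Suc n - 2*k') * C)"
  have kb: "2 * k \<le> n" using lpkI_bound[of 0 \<sigma>] len by (simp add: k_def lpk_lpkI)
  have "(\<Sum>j\<le>n. WL y \<beta> (Suc n) (ins j M \<sigma>)) = (\<Sum>j<n. WL y \<beta> (Suc n) (ins j M \<sigma>)) + WL y \<beta> (Suc n) (ins n M \<sigma>)"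
    by (simp add: lessThan_Suc_atMost[symmetric])
  also have "(\<Sum>j<n. WL y \<beta> (Suc n) (ins j M \<sigma>)) = (\<Sum>j<n. G (lpkI 0 (ins j M \<sigma>)))"
    by (rule sum.cong) (use M len in \<open>simp_all add: WL_def G_def rlmin_ins lpk_lpkI S_def U_def C_def r_def\<close>)
  also have "\<dots> = of_nat (2*k) * G k + of_nat n * G (Suc k) - of_nat (2*k) * G (Suc k)"
    using lpk_slots[of \<sigma> M 0 G] M M0 len by (simp add: k_def lpk_lpkI algebra_simps)
  also have "WL y \<beta> (Suc n) (ins n M \<sigma>) = S^k * U^(Suc n - 2*k) * [:\<beta>^Suc r:]"
  proof -
    have "rlmin (\<sigma> @ [M]) = Suc r" using rlmin_ins[of \<sigma> M n] M len by (simp add: ins_len r_def)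
    then show ?thesis using M len by (simp add: WL_def ins_len lpk_lpkI lpkI_snoc k_def S_def U_def)
  qed
  finally have LHS: "(\<Sum>j\<le>n. WL y \<beta> (Suc n) (ins j M \<sigma>)) =
     of_nat (2*k) * G k + of_nat n * G (Suc k) - of_nat (2*k) * G (Suc k) + S^k * U^(Suc n - 2*k) * [:\<beta>^Suc r:]" .
  have W: "WL y \<beta> n \<sigma> = S^k * U^(n - 2*k) * C"
    by (simp add: WL_def k_def r_def S_def U_def C_def)
  have pdU: "[:0,1:] * pderiv (U^e) = smult (of_nat e) (U^(e-1) * [:0,1/2:])" for e
    by (simp add: U_def pderiv_power pderiv_pCons mult_ac)
  have pdW: "[:0,1:] * pderiv (S^k * U^e * C) = smult (of_nat k) (S^k * U^e * C) + smult (of_nat e) (S^k * U^(e-1) * [:0,1/2:] * C)" for e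
  proof -
    have "pderiv C = 0" by (simp add: C_def pderiv_pCons)
    then have "[:0,1:] * pderiv (S^k * U^e * C) = ([:0,1:] * pderiv (S^k)) * U^e * C + S^k * ([:0,1:] * pderiv (U^e)) * C"
      by (simp add: pderiv_mult algebra_simps)
    also have "\<dots> = smult (of_nat k) (S^k * U^e * C) + smult (of_nat e) (S^k * U^(e-1) * [:0,1/2:] * C)"
    proof -
      have XS: "[:0,1:] * pderiv (S^k) = smult (of_nat k) (S^k)" unfolding S_def by (rule Xpd_S)
      show ?thesis by (simp only: pdU XS) simp
    qed
    finally show ?thesis .
  qed
  show ?thesis
  proof (cases "n - 2*k")
    case 0
    then have n: "n = 2*k" using kb by simp
    show ?thesis unfolding LHS W Top_def pdW
      apply (rule poly_eq_poly_eq_iff[THEN iffD1])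
      apply (rule ext)
      apply (simp add: G_def S_def U_def C_def n)
      apply (simp add: field_simps)
      done
  next
    case (Suc e')
    then have n: "n = 2*k + Suc e'" using kb by simp
    show ?thesis unfolding LHS W Top_def pdW
      apply (rule poly_eq_poly_eq_iff[THEN iffD1])
      apply (rule ext)
      apply (simp add: G_def S_def U_def C_def n)
      apply (simp add: field_simps)
      done
  qed
qed

lemma rlmin_pos: "xs \<noteq> [] \<Longrightarrow> 0 < rlmin xs"
proof (induction xs)
  case Nil then show ?case by simp
next
  case (Cons a xs) then show ?case by (cases "xs = []") auto
qed

lemma lrmin_pos: "xs \<noteq> [] \<Longrightarrow> 0 < lrmin xs"
  by (simp add: lrmin_rev rlmin_pos)

lemma des_le: "des xs \<le> length xs - 1"
proof (induction xs)
  case Nil then show ?case by simp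
next
  case (Cons a xs) then show ?case by (cases xs) auto
qed

lemma sum_atMost_Suc_split:
  "(\<Sum>j\<le>Suc n. f j) = f 0 + (\<Sum>j<n. f (Suc j)) + (f (Suc n) :: 'b::comm_monoid_add)"
proof -
  have "(\<Sum>j\<le>Suc n. f j) = (\<Sum>j<Suc (Suc n). f j)" by (simp add: lessThan_Suc_atMost)
  also have "\<dots> = f 0 + (\<Sum>j<Suc n. f (Suc j))" by (rule sum.lessThan_Suc_shift)
  also have "\<dots> = f 0 + (\<Sum>j<n. f (Suc j)) + f (Suc n)" by (simp add: add.assoc)
  finally show ?thesis .
qed

lemma WR_step:
  fixes y \<beta> :: "'a::field_char_0"
  assumes M: "\<forall>z\<in>set \<tau>. z < M" and len: "length \<tau> = Suc n"
  shows "(\<Sum>j\<le>Suc n. WR y \<beta> (Suc n) (ins j M \<tau>)) = Top y \<beta> n (WR y \<beta> n \<tau>)"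
proof -
  define d where "d = des \<tau>"
  define l where "l = lrmin \<tau>"
  define r where "r = rlmin \<tau>"
  define X where "X = ([:0,1:] :: 'a poly)"
  define c where "c = (\<beta>/2)^(l + r - 2)"
  define g where "g = (\<lambda>d'. smult (y^(Suc n - d') * c) (X^d'))"
  have ne: "\<tau> \<noteq> []" using len by auto
  have l1: "l \<ge> 1" using lrmin_pos[OF ne] by (simp add: l_def)
  have r1: "r \<ge> 1" using rlmin_pos[OF ne] by (simp add: r_def)
  have ex1: "Suc l + r - 2 = Suc (l + r - 2)" "l + Suc r - 2 = Suc (l + r - 2)" using l1 r1 by arith+
  have dn: "d \<le> n" using des_le[of \<tau>] len by (simp add: d_def)
  have f0: "WR y \<beta> (Suc n) (ins 0 M \<tau>) = smult (y^(n - d) * (\<beta>/2)^Suc (l + r - 2)) (X^Suc d)"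
  proof -
    have "des (M # \<tau>) = Suc d" using des_M_Cons[OF ne M] by (simp add: d_def)
    moreover have "lrmin (M # \<tau>) = Suc l" using lrmin_ins[OF M, of 0] by (simp add: l_def)
    moreover have "rlmin (M # \<tau>) = r" using rlmin_ins[OF M, of 0] len by (simp add: r_def del: rlmin_Cons)
    ultimately show ?thesis using ex1 by (simp add: WR_def X_def Suc_diff_le del: rlmin_Cons)
  qed
  have fn: "WR y \<beta> (Suc n) (ins (Suc n) M \<tau>) = smult (y^(Suc n - d) * (\<beta>/2)^Suc (l + r - 2)) (X^d)"
  proof -
    have i: "ins (Suc n) M \<tau> = \<tau> @ [M]" using len by (simp add: ins_len)
    have "des (\<tau> @ [M]) = d" using des_snoc[OF M] by (simp add: d_def)
    moreover have "lrmin (\<tau> @ [M]) = l" using lrmin_ins[OF M, of "Suc n"] len i by (simp add: l_def)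
    moreover have "rlmin (\<tau> @ [M]) = Suc r" using rlmin_ins[OF M, of "Suc n"] len i by (simp add: r_def)
    ultimately show ?thesis using ex1 i by (simp add: WR_def X_def Suc_diff_le)
  qed
  have mid: "(\<Sum>j<n. WR y \<beta> (Suc n) (ins (Suc j) M \<tau>)) = (\<Sum>j<length \<tau> - 1. g (des (ins (Suc j) M \<tau>)))"
    by (rule sum.cong) (use M len in \<open>simp_all add: WR_def g_def c_def X_def lrmin_ins rlmin_ins l_def r_def\<close>)
  have midv: "(\<Sum>j<length \<tau> - 1. g (des (ins (Suc j) M \<tau>))) = of_nat d * g d + of_nat n * g (Suc d) - of_nat d * g (Suc d)"
    using des_mid[OF M, of g] len by (simp add: d_def algebra_simps)
  have W: "WR y \<beta> n \<tau> = smult (y^(n - d) * c) (X^d)"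
    by (simp add: WR_def d_def c_def l_def r_def X_def)
  have XW: "[:0,1:] * pderiv (smult a (X^d)) = smult (of_nat d) (smult a (X^d))" for a
  proof -
    have "[:0,1:] * pderiv (smult a (X^d)) = smult a ([:0,1:] * pderiv (X^d))"
      by (simp only: pderiv_smult mult_smult_right)
    also have "[:0,1:] * pderiv (X^d) = smult (of_nat d) (X^d)" unfolding X_def by (rule Xpd_S)
    finally show ?thesis by (simp add: mult.commute)
  qed
  obtain e where e: "n = d + e" using dn le_Suc_ex by blast
  show ?thesis
    unfolding sum_atMost_Suc_split f0 fn mid midv W Top_def XW
    apply (rule poly_eq_poly_eq_iff[THEN iffD1])
    apply (rule ext)
    apply (simp add: g_def c_def X_def e Suc_diff_le)
    apply (simp add: field_simps)
    done
qed

definition LP :: "'a::field_char_0 \<Rightarrow> 'a \<Rightarrow> nat \<Rightarrow> 'a poly" where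
  "LP y \<beta> n = (\<Sum>s\<in>permutations_of_set {1..n}. WL y \<beta> n s)"

definition RP :: "'a::field_char_0 \<Rightarrow> 'a \<Rightarrow> nat \<Rightarrow> 'a poly" where
  "RP y \<beta> n = (\<Sum>s\<in>permutations_of_set {1..n+1}. WR y \<beta> n s)"

lemma perm_elems: "s \<in> permutations_of_set {1..n} \<Longrightarrow> (\<forall>z\<in>set s. z < Suc n) \<and> length s = n"
  by (auto dest: permutations_of_setD simp: length_finite_permutations_of_set)

lemma LP_step: "LP y \<beta> (Suc n) = Top y \<beta> n (LP y \<beta> n)"
proof -
  have "{1..Suc n} = insert (Suc n) {1..n}" by auto
  then have "LP y \<beta> (Suc n) = (\<Sum>\<sigma>\<in>permutations_of_set {1..n}. \<Sum>j\<le>n. WL y \<beta> (Suc n) (ins j (Suc n) \<sigma>))"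
    unfolding LP_def by (simp add: sum_perms_insert)
  also have "\<dots> = (\<Sum>\<sigma>\<in>permutations_of_set {1..n}. Top y \<beta> n (WL y \<beta> n \<sigma>))"
    by (rule sum.cong[OF refl]) (use perm_elems in \<open>blast intro: WL_step\<close>)
  also have "\<dots> = Top y \<beta> n (LP y \<beta> n)" by (simp add: LP_def Top_sum)
  finally show ?thesis .
qed

lemma RP_step: "RP y \<beta> (Suc n) = Top y \<beta> n (RP y \<beta> n)"
proof -
  have "{1..Suc n + 1} = insert (Suc (Suc n)) {1..Suc n}" by auto
  then have "RP y \<beta> (Suc n) = (\<Sum>\<sigma>\<in>permutations_of_set {1..Suc n}. \<Sum>j\<le>Suc n. WR y \<beta> (Suc n) (ins j (Suc (Suc n)) \<sigma>))"
    unfolding RP_def by (simp add: sum_perms_insert)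
  also have "\<dots> = (\<Sum>\<sigma>\<in>permutations_of_set {1..Suc n}. Top y \<beta> n (WR y \<beta> n \<sigma>))"
    by (rule sum.cong[OF refl]) (use perm_elems in \<open>blast intro: WR_step\<close>)
  also have "\<dots> = Top y \<beta> n (RP y \<beta> n)" by (simp add: RP_def Top_sum)
  finally show ?thesis .
qed

lemma LP_RP: "LP y \<beta> n = RP y \<beta> n"
proof (induction n)
  case 0
  have "lrmin [Suc 0] = 1" by (simp add: lrmin_rev)
  then show ?case by (simp add: LP_def RP_def WL_def WR_def lpk_lpkI)
next
  case (Suc n) then show ?case by (simp add: LP_step RP_step)
qed

theorem theorem1p10:
  fixes x y \<beta> :: "'a :: field_char_0" and n :: nat
  shows "(\<Sum>s\<in>permutations_of_set {1..n}.
            (x * y) ^ lpk s * ((x + y) / 2) ^ (n - 2 * lpk s) * \<beta> ^ rlmin s)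
       = (\<Sum>s\<in>permutations_of_set {1..n+1}.
            x ^ des s * y ^ (n - des s) * (\<beta> / 2) ^ (lrmin s + rlmin s - 2))"
proof -
  have p1: "poly [:0,y:] x = x * y" by simp
  have p2: "poly [:y/2, 1/2:] x = (x + y) / 2" by (simp add: field_simps)
  have "poly (LP y \<beta> n) x = (\<Sum>s\<in>permutations_of_set {1..n}.
            (x * y) ^ lpk s * ((x + y) / 2) ^ (n - 2 * lpk s) * \<beta> ^ rlmin s)"
    unfolding LP_def poly_sum by (rule sum.cong[OF refl]) (simp only: WL_def poly_mult poly_power p1 p2, simp)
  moreover have "poly (RP y \<beta> n) x = (\<Sum>s\<in>permutations_of_set {1..n+1}.
            x ^ des s * y ^ (n - des s) * (\<beta> / 2) ^ (lrmin s + rlmin s - 2))"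
    unfolding RP_def poly_sum by (rule sum.cong[OF refl]) (simp add: WR_def mult_ac)
  ultimately show ?thesis by (simp add: LP_RP)
qed

end
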